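(* For $n\ge1$ let $S_n$ be the set of binary sequences of length $n$ in which no maximal run of zeros has length congruent to $1 \bmod 3$. Classify each $\mathbf v\in S_n$ into one of five types: type A if $\mathbf v$ ends in a maximal run of $m>0$ zeros with $m\equiv 0\pmod 3$; type B if it ends in a maximal run of $m>0$ zeros with $m\equiv 2\pmod 3$; type C if $\mathbf v$ ends in $1$ and either $\mathbf v=1$ or the final $1$ is immediately preceded by a maximal run of $m>0$ zeros with $m\equiv0\pmod 3$; type D if the final $1$ is immediately preceded by a maximal run of $m>0$ zeros with $m\equiv 2\pmod 3$; type E if $\mathbf v$ ends in $11$. Define $f_n:S_n\to\mathcal P(S_{n+1})$ by: if $\mathbf v$ has type A, $f_n(\mathbf v)=\{\mathbf v1\}$; if type B, $f_n(\mathbf v)=\{\mathbf v0,\mathbf v1\}$; if type C or E, writing $\mathbf v=\mathbf u1$, $f_n(\mathbf v)=\{\mathbf v1,\mathbf u00\}$; if type D, $f_n(\mathbf v)=\{\mathbf v1\}$. Then the sets $f_n(\mathbf v)$, $\mathbf v\in S_n$, are pairwise disjoint and $$S_{n+1}=\bigcup_{\mathbf v\in S_n}f_n(\mathbf v),\qquad |S_{n+1}|=\sum_{\mathbf v\in S_n}|f_n(\mathbf v)|.$$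
   Context: A "run of zeros" means a maximal block of consecutive zeros; e.g. $00000\in S_5$. $\mathcal P(X)$ denotes the power set of $X$. *)

theory Defs
  imports Main
begin

definition zero_run :: "nat list \<Rightarrow> nat \<Rightarrow> nat \<Rightarrow> bool" where
  "zero_run v i j \<longleftrightarrow> i < j \<and> j \<le> length v \<and> (\<forall>k. i \<le> k \<and> k < j \<longrightarrow> v ! k = 0)
     \<and> (i = 0 \<or> v ! (i - 1) \<noteq> 0) \<and> (j = length v \<or> v ! j \<noteq> 0)"

definition S :: "nat \<Rightarrow> nat list set" where
  "S n = {v. length v = n \<and> set v \<subseteq> {0, 1} \<and>
            (\<forall>i j. zero_run v i j \<longrightarrow> (j - i) mod 3 \<noteq> 1)}"

definition typeA :: "nat list \<Rightarrow> bool" where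
  "typeA v \<longleftrightarrow> (\<exists>i. zero_run v i (length v) \<and> (length v - i) mod 3 = 0)"

definition typeB :: "nat list \<Rightarrow> bool" where
  "typeB v \<longleftrightarrow> (\<exists>i. zero_run v i (length v) \<and> (length v - i) mod 3 = 2)"

definition typeC :: "nat list \<Rightarrow> bool" where
  "typeC v \<longleftrightarrow> v \<noteq> [] \<and> last v = 1 \<and>
     (v = [1] \<or> (\<exists>i. zero_run v i (length v - 1) \<and> (length v - 1 - i) mod 3 = 0))"

definition typeD :: "nat list \<Rightarrow> bool" where
  "typeD v \<longleftrightarrow> v \<noteq> [] \<and> last v = 1 \<and>
     (\<exists>i. zero_run v i (length v - 1) \<and> (length v - 1 - i) mod 3 = 2)"

definition typeE :: "nat list \<Rightarrow> bool" where
  "typeE v \<longleftrightarrow> (\<exists>u. v = u @ [1, 1])"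

definition f :: "nat list \<Rightarrow> nat list set" where
  "f v = (if typeA v then {v @ [1]}
          else if typeB v then {v @ [0], v @ [1]}
          else if typeC v \<or> typeE v then {v @ [1], butlast v @ [0, 0]}
          else if typeD v then {v @ [1]}
          else {})"

end

theory Submission
  imports Defs
begin

definition good :: "nat list \<Rightarrow> bool" where
  "good v \<longleftrightarrow> (\<forall>i j. zero_run v i j \<longrightarrow> (j - i) mod 3 \<noteq> 1)"

lemma S_good: "v \<in> S n \<longleftrightarrow> length v = n \<and> set v \<subseteq> {0,1} \<and> good v"
  by (simp add: S_def good_def)

lemma zr_le: "zero_run v i j \<Longrightarrow> i < j \<and> j \<le> length v"
  by (simp add: zero_run_def)

lemma zr_not_end:
  assumes "u = [] \<or> last u \<noteq> 0"
  shows "\<not> zero_run u i (length u)"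
proof
  assume z: "zero_run u i (length u)"
  then have "u \<noteq> []" "i < length u" by (auto simp: zero_run_def)
  with assms have "u ! (length u - 1) \<noteq> 0" by (simp add: last_conv_nth)
  moreover have "\<forall>k. i \<le> k \<and> k < length u \<longrightarrow> u ! k = 0" using z unfolding zero_run_def by auto
  then have "u ! (length u - 1) = 0" using \<open>i < length u\<close> 
  proof -
    have "i \<le> length u - 1" "length u - 1 < length u" using \<open>i < length u\<close> by arith+
    then show ?thesis using \<open>\<forall>k. i \<le> k \<and> k < length u \<longrightarrow> u ! k = 0\<close> by blast
  qed
  ultimately show False by simp
qed

lemma zr_rep:
  assumes a: "u = [] \<or> last u \<noteq> 0"
  shows "zero_run (u @ replicate m 0) i j \<longleftrightarrow> zero_run u i j \<or> (0 < m \<and> i = length u \<and> j = length u + m)"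
proof (cases "m = 0")
  case True then show ?thesis by simp
next
  case False
  let ?w = "u @ replicate m 0"
  have lw: "length ?w = length u + m" by simp
  have wl: "\<And>k. k < length u \<Longrightarrow> ?w ! k = u ! k" by (simp add: nth_append)
  have wr: "\<And>k. length u \<le> k \<Longrightarrow> k < length u + m \<Longrightarrow> ?w ! k = 0" by (simp add: nth_append)
  have lastu: "u \<noteq> [] \<Longrightarrow> u ! (length u - 1) \<noteq> 0" using a by (simp add: last_conv_nth)
  show ?thesis
  proof
    assume z: "zero_run ?w i j"
    then have ij: "i < j" "j \<le> length u + m" and zz: "\<And>k. i \<le> k \<Longrightarrow> k < j \<Longrightarrow> ?w ! k = 0"
      and li: "i = 0 \<or> ?w ! (i - 1) \<noteq> 0" and rj: "j = length u + m \<or> ?w ! j \<noteq> 0"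
      unfolding zero_run_def by auto
    show "zero_run u i j \<or> (0 < m \<and> i = length u \<and> j = length u + m)"
    proof (cases "j \<le> length u")
      case True
      have "j \<noteq> length u"
      proof
        assume "j = length u"
        then have "?w ! j = 0" using False by (simp add: nth_append)
        with rj False \<open>j = length u\<close> show False by simp
      qed
      then have "j < length u" using True by simp
      moreover have "i - 1 < length u" using ij \<open>j < length u\<close> by simp
      ultimately have "zero_run u i j" using ij zz li rj wl unfolding zero_run_def
        by (auto simp: nth_append)
      then show ?thesis by simp
    next
      case jg: False
      have "i = length u"
      proof (rule ccontr)
        assume "i \<noteq> length u"
        then consider "i < length u" | "i > length u" by linarith
        then show False
        proof cases
          case 1
          then have "u \<noteq> []" by auto
          have "?w ! (length u - 1) = 0" using zz[of "length u - 1"] 1 jg by simp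
          with wl[of "length u - 1"] lastu \<open>u \<noteq> []\<close> show False by simp
        next
          case 2
          then have "?w ! (i - 1) = 0" using wr[of "i-1"] ij by simp
          with li 2 show False by simp
        qed
      qed
      moreover have "j = length u + m"
      proof (rule ccontr)
        assume "j \<noteq> length u + m"
        then have "?w ! j = 0" using wr[of j] ij jg by simp
        with rj \<open>j \<noteq> length u + m\<close> show False by simp
      qed
      ultimately show ?thesis using False by simp
    qed
  next
    assume "zero_run u i j \<or> (0 < m \<and> i = length u \<and> j = length u + m)"
    then show "zero_run ?w i j"
    proof
      assume z: "zero_run u i j"
      have "j \<noteq> length u" using zr_not_end[OF a] z by auto
      then have "j < length u" using z by (simp add: zero_run_def)
      then show ?thesis using z wl unfolding zero_run_def by (auto simp: nth_append)
    next
      assume h: "0 < m \<and> i = length u \<and> j = length u + m"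
      show ?thesis unfolding zero_run_def
      proof (intro conjI allI impI)
        show "i < j" "j \<le> length ?w" using h by auto
        show "\<And>k. i \<le> k \<and> k < j \<Longrightarrow> ?w ! k = 0" using h wr by auto
        show "i = 0 \<or> ?w ! (i - 1) \<noteq> 0"
        proof (cases "u = []")
          case True then show ?thesis using h by simp
        next
          case f: False
          then have "length u > 0" by simp
          then show ?thesis using h wl[of "length u - 1"] lastu f by simp
        qed
        show "j = length ?w \<or> ?w ! j \<noteq> 0" using h by simp
      qed
    qed
  qed
qed

lemma zr_one: "zero_run (v @ [1]) i j \<longleftrightarrow> zero_run v i j"
proof
  assume z: "zero_run (v @ [1]) i j"
  have "j \<le> length v"
  proof (rule ccontr)
    assume "\<not> j \<le> length v"
    then have "j = length v + 1" using z by (simp add: zero_run_def)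
    moreover have "\<forall>k. i \<le> k \<and> k < j \<longrightarrow> (v @ [1]) ! k = 0" "i < j" using z unfolding zero_run_def by auto
    moreover have "i \<le> length v" "length v < j" using \<open>j = length v + 1\<close> \<open>i < j\<close> by arith+
    ultimately have "(v @ [1]) ! length v = 0" by blast
    then show False by simp
  qed
  then show "zero_run v i j" using z unfolding zero_run_def
    by (auto simp: nth_append split: if_splits)
next
  assume z: "zero_run v i j"
  then show "zero_run (v @ [1]) i j" unfolding zero_run_def
    by (auto simp: nth_append)
qed

lemma good_one: "good (v @ [1]) \<longleftrightarrow> good v"
  unfolding good_def zr_one by (rule refl)

lemma good_rep:
  assumes a: "u = [] \<or> last u \<noteq> 0"
  shows "good (u @ replicate m 0) \<longleftrightarrow> good u \<and> (m = 0 \<or> m mod 3 \<noteq> 1)"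
  unfolding good_def zr_rep[OF a] by auto

lemma dec: "\<exists>u m. v = u @ replicate m 0 \<and> (u = [] \<or> last u \<noteq> 0)"
proof (induction v rule: rev_induct)
  case Nil then show ?case by auto
next
  case (snoc x xs)
  then obtain u m where h: "xs = u @ replicate m 0" "u = [] \<or> last u \<noteq> 0" by blast
  show ?case
  proof (cases "x = 0")
    case True
    then have "xs @ [x] = u @ replicate (Suc m) 0" using h by (simp add: replicate_append_same[symmetric])
    then show ?thesis using h by blast
  next
    case False
    then show ?thesis by (intro exI[of _ "xs @ [x]"] exI[of _ 0]) simp
  qed
qed


lemma TA:
  assumes a: "u = [] \<or> last u \<noteq> 0"
  shows "typeA (u @ replicate m 0) \<longleftrightarrow> 0 < m \<and> m mod 3 = 0"
proof -
  have "zero_run (u @ replicate m 0) i (length u + m) \<longleftrightarrow> 0 < m \<and> i = length u" for i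
    using zr_rep[OF a, of m i "length u + m"] zr_not_end[OF a, of i] zr_le[of u i "length u + m"]
    by auto
  then show ?thesis unfolding typeA_def by auto
qed

lemma TB:
  assumes a: "u = [] \<or> last u \<noteq> 0"
  shows "typeB (u @ replicate m 0) \<longleftrightarrow> 0 < m \<and> m mod 3 = 2"
proof -
  have "zero_run (u @ replicate m 0) i (length u + m) \<longleftrightarrow> 0 < m \<and> i = length u" for i
    using zr_rep[OF a, of m i "length u + m"] zr_not_end[OF a, of i] zr_le[of u i "length u + m"]
    by auto
  then show ?thesis unfolding typeB_def by auto
qed

lemma zr_last1:
  assumes a: "u = [] \<or> last u \<noteq> 0"
  shows "zero_run ((u @ replicate m 0) @ [1]) i (length u + m) \<longleftrightarrow> 0 < m \<and> i = length u"
  unfolding zr_one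
  using zr_rep[OF a, of m i "length u + m"] zr_not_end[OF a, of i] zr_le[of u i "length u + m"]
  by auto

lemma TC:
  assumes a: "u = [] \<or> last u \<noteq> 0"
  shows "typeC ((u @ replicate m 0) @ [1]) \<longleftrightarrow> (u = [] \<and> m = 0) \<or> (0 < m \<and> m mod 3 = 0)"
proof -
  have l: "length ((u @ replicate m 0) @ [1]) - 1 = length u + m" by simp
  show ?thesis unfolding typeC_def l zr_last1[OF a] by (cases m) auto
qed

lemma TD:
  assumes a: "u = [] \<or> last u \<noteq> 0"
  shows "typeD ((u @ replicate m 0) @ [1]) \<longleftrightarrow> 0 < m \<and> m mod 3 = 2"
proof -
  have l: "length ((u @ replicate m 0) @ [1]) - 1 = length u + m" by simp
  show ?thesis unfolding typeD_def l zr_last1[OF a] by auto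
qed

lemma snoc1:
  assumes "v \<noteq> []" "last v = (1::nat)"
  shows "v = butlast v @ [1]"
proof -
  have "butlast v @ [last v] = v" using assms(1) by (rule append_butlast_last_id)
  then show ?thesis unfolding assms(2) by (rule sym)
qed

lemma E_iff: "typeE (x @ [1]) \<longleftrightarrow> x \<noteq> [] \<and> last x = 1"
proof
  assume "typeE (x @ [1])"
  then obtain w where "x @ [1] = w @ [1, 1]" unfolding typeE_def by blast
  then have "x = w @ [1]" by simp
  then show "x \<noteq> [] \<and> last x = 1" by simp
next
  assume h: "x \<noteq> [] \<and> last x = 1"
  then have "x = butlast x @ [1]" using snoc1 by blast
  then have "x @ [1] = butlast x @ [1, 1]" by (subst \<open>x = butlast x @ [1]\<close>) simp
  then show "typeE (x @ [1])" unfolding typeE_def by blast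
qed

lemma TE:
  shows "typeE ((u @ replicate m 0) @ [1]) \<longleftrightarrow> m = 0 \<and> u \<noteq> [] \<and> last u = 1"
  unfolding E_iff by (cases m) (auto simp: replicate_append_same[symmetric])

lemma notA1: "\<not> typeA (x @ [1])"
  using zr_not_end[of "x @ [1]"] unfolding typeA_def by auto

lemma notB1: "\<not> typeB (x @ [1])"
  using zr_not_end[of "x @ [1]"] unfolding typeB_def by auto

lemma CE_shape: "typeC v \<or> typeE v \<Longrightarrow> v \<noteq> [] \<and> last v = 1"
  unfolding typeC_def typeE_def by auto

lemma last01: "set u \<subseteq> {0,1} \<Longrightarrow> u \<noteq> [] \<Longrightarrow> last u \<noteq> 0 \<Longrightarrow> last u = 1"
proof -
  assume "set u \<subseteq> {0,1}" "u \<noteq> []" "last u \<noteq> 0"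
  then have "last u \<in> {0,1}" using last_in_set[of u] by blast
  then show ?thesis using \<open>last u \<noteq> 0\<close> by auto
qed


lemma has_type:
  assumes v: "v \<in> S n" and n: "n \<ge> 1"
  shows "typeA v \<or> typeB v \<or> typeC v \<or> typeD v \<or> typeE v"
proof -
  from v have len: "length v = n" and bin: "set v \<subseteq> {0,1}" and g: "good v" by (auto simp: S_good)
  obtain u m where vu: "v = u @ replicate m 0" and a: "u = [] \<or> last u \<noteq> 0" using dec by blast
  show ?thesis
  proof (cases "m = 0")
    case False
    then have "m mod 3 \<noteq> 1" using g vu good_rep[OF a] by auto
    then have "m mod 3 = 0 \<or> m mod 3 = 2" by arith
    then show ?thesis using TA[OF a] TB[OF a] vu False by auto
  next
    case True
    then have "v = u" using vu by simp
    then have "u \<noteq> []" using len n by auto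
    moreover have "set u \<subseteq> {0,1}" using bin \<open>v = u\<close> by simp
    ultimately have "last u = 1" using last01 a by blast
    then have vb: "v = butlast v @ [1]" using \<open>v = u\<close> \<open>u \<noteq> []\<close> snoc1 by blast
    obtain u' m' where bu: "butlast v = u' @ replicate m' 0" and a': "u' = [] \<or> last u' \<noteq> 0"
      using dec by blast
    have v2: "v = (u' @ replicate m' 0) @ [1]" using vb unfolding bu .
    have "good (butlast v @ [1])" by (subst vb[symmetric]) (rule g)
    then have "good (butlast v)" unfolding good_one .
    then have gm: "m' = 0 \<or> m' mod 3 \<noteq> 1" using bu good_rep[OF a'] by auto
    have bin': "set u' \<subseteq> {0,1}" using bin v2 by auto
    show ?thesis
    proof (cases "m' = 0")
      case True
      show ?thesis
      proof (cases "u' = []")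
        case True
        then show ?thesis using TC[OF a', of m'] \<open>m' = 0\<close> v2 by auto
      next
        case False
        then have "last u' = 1" using last01 bin' a' by blast
        then show ?thesis using TE[of u' m'] \<open>m' = 0\<close> False v2 by auto
      qed
    next
      case False
      then have "m' mod 3 = 0 \<or> m' mod 3 = 2" using gm by arith
      then show ?thesis using TC[OF a', of m'] TD[OF a', of m'] False v2 by auto
    qed
  qed
qed

lemma one_in_f: "typeA v \<or> typeB v \<or> typeC v \<or> typeD v \<or> typeE v \<Longrightarrow> v @ [1] \<in> f v"
  unfolding f_def by auto

lemma CE_decomp:
  assumes ce: "typeC v \<or> typeE v" and bin: "set v \<subseteq> {0,1}"
  obtains u' m' where "v = (u' @ replicate m' 0) @ [1]" "u' = [] \<or> last u' \<noteq> 0"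
    "(u' = [] \<and> m' = 0) \<or> (0 < m' \<and> m' mod 3 = 0) \<or> (m' = 0 \<and> u' \<noteq> [] \<and> last u' = 1)"
proof -
  have "v \<noteq> [] \<and> last v = 1" using CE_shape[OF ce] .
  then have vb: "v = butlast v @ [1]" using snoc1 by blast
  obtain u' m' where bu: "butlast v = u' @ replicate m' 0" and a': "u' = [] \<or> last u' \<noteq> 0"
    using dec by blast
  have v2: "v = (u' @ replicate m' 0) @ [1]" using vb unfolding bu .
  have "typeC ((u' @ replicate m' 0) @ [1]) \<or> typeE ((u' @ replicate m' 0) @ [1])"
    using ce unfolding v2 .
  then have "(u' = [] \<and> m' = 0) \<or> (0 < m' \<and> m' mod 3 = 0) \<or> (m' = 0 \<and> u' \<noteq> [] \<and> last u' = 1)"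
    unfolding TC[OF a'] TE by blast
  then show ?thesis by (rule that[OF v2 a'])
qed

lemma f_sub:
  assumes v: "v \<in> S n"
  shows "f v \<subseteq> S (Suc n)"
proof
  fix w assume w: "w \<in> f v"
  from v have len: "length v = n" and bin: "set v \<subseteq> {0,1}" and g: "good v" by (auto simp: S_good)
  have w1: "v @ [1] \<in> S (Suc n)" using len bin g good_one by (auto simp: S_good)
  obtain u m where vu: "v = u @ replicate m 0" and a: "u = [] \<or> last u \<noteq> 0" using dec by blast
  show "w \<in> S (Suc n)"
  proof (cases "typeA v")
    case True then show ?thesis using w w1 unfolding f_def by auto
  next
    case nA: False
    show ?thesis
    proof (cases "typeB v")
      case True
      then have m: "0 < m \<and> m mod 3 = 2" using TB[OF a] vu by auto
      have e: "v @ [0] = u @ replicate (Suc m) 0" using vu by (simp add: replicate_append_same[symmetric])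
      have "good (u @ replicate (Suc m) 0)"
      proof -
        have gu: "good u" using g vu good_rep[OF a, of m] by blast
        have "Suc m mod 3 \<noteq> 1" using m by arith
        then show ?thesis using good_rep[OF a, of "Suc m"] gu by blast
      qed
      then have "good (v @ [0])" unfolding e .
      moreover have "set (v @ [0]) \<subseteq> {0,1}" using bin by simp
      ultimately have "v @ [0] \<in> S (Suc n)" using len unfolding S_good by simp
      then show ?thesis using w w1 nA True unfolding f_def by auto
    next
      case nB: False
      show ?thesis
      proof (cases "typeC v \<or> typeE v")
        case True
        obtain u' m' where v2: "v = (u' @ replicate m' 0) @ [1]" and a': "u' = [] \<or> last u' \<noteq> 0"
          and c: "(u' = [] \<and> m' = 0) \<or> (0 < m' \<and> m' mod 3 = 0) \<or> (m' = 0 \<and> u' \<noteq> [] \<and> last u' = 1)"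
          using CE_decomp[OF True bin] by blast
        have bv: "butlast v = u' @ replicate m' 0" unfolding v2 butlast_snoc ..
        then have e: "butlast v @ [0, 0] = u' @ replicate (Suc (Suc m')) 0"
          by (simp add: replicate_append_same[symmetric])
        have "good ((u' @ replicate m' 0) @ [1])" by (subst v2[symmetric]) (rule g)
        then have "good (u' @ replicate m' 0)" unfolding good_one .
        then have "good u'" using good_rep[OF a'] by auto
        moreover have "Suc (Suc m') mod 3 \<noteq> 1"
        proof -
          have "m' mod 3 = 0" using c by auto
          then show ?thesis by arith
        qed
        ultimately have "good (butlast v @ [0, 0])" unfolding e using good_rep[OF a', of "Suc (Suc m')"] by blast
        moreover have "length (butlast v @ [0, 0]) = Suc n" using len v2 by simp
        moreover have "set (butlast v) \<subseteq> {0,1}" using bin by (meson in_set_butlastD subset_iff)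
        then have "set (butlast v @ [0, 0]) \<subseteq> {0,1}" by simp
        ultimately have "butlast v @ [0, 0] \<in> S (Suc n)" by (simp add: S_good)
        then show ?thesis using w w1 nA nB True unfolding f_def by auto
      next
        case False
        then show ?thesis using w w1 nA nB unfolding f_def by (auto split: if_splits)
      qed
    qed
  qed
qed


lemma cover:
  assumes w: "w \<in> S (Suc n)" and n: "n \<ge> 1"
  shows "\<exists>v\<in>S n. w \<in> f v"
proof -
  from w have len: "length w = Suc n" and bin: "set w \<subseteq> {0,1}" and g: "good w" by (auto simp: S_good)
  obtain u m where wu: "w = u @ replicate m 0" and a: "u = [] \<or> last u \<noteq> 0" using dec by blast
  have gu: "good u" and gm: "m = 0 \<or> m mod 3 \<noteq> 1" using g wu good_rep[OF a] by auto
  have binu: "set u \<subseteq> {0,1}" using bin wu by auto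
  consider "m = 0" | "0 < m" "m mod 3 = 0" | "m mod 3 = 2" using gm by arith
  then show ?thesis
  proof cases
    case 1
    then have "w = u" using wu by simp
    then have "u \<noteq> []" using len by auto
    then have "last u = 1" using last01 a binu by blast
    then have wb: "w = butlast w @ [1]" using \<open>w = u\<close> \<open>u \<noteq> []\<close> snoc1 by blast
    have "good (butlast w @ [1])" by (subst wb[symmetric]) (rule g)
    then have "good (butlast w)" unfolding good_one .
    moreover have "length (butlast w) = n" using len by simp
    moreover have "set (butlast w) \<subseteq> {0,1}" using bin by (meson in_set_butlastD subset_iff)
    ultimately have v: "butlast w \<in> S n" by (simp add: S_good)
    have "butlast w @ [1] \<in> f (butlast w)" using one_in_f[OF has_type[OF v n]] .
    then have "w \<in> f (butlast w)" by (subst wb) 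
    then show ?thesis using v by blast
  next
    case 2
    then obtain k where k: "m = Suc k" by (cases m) auto
    define v where "v = u @ replicate k 0"
    have wv: "w = v @ [0]" using wu k v_def by (simp add: replicate_append_same[symmetric])
    have "k mod 3 = 2" using 2 k by arith
    then have tB: "typeB v" and nA: "\<not> typeA v" using TB[OF a, of k] TA[OF a, of k] v_def by auto
    have "good v" using gu good_rep[OF a, of k] \<open>k mod 3 = 2\<close> v_def by auto
    moreover have "length v = n" using len wv by simp
    moreover have "set v \<subseteq> {0,1}" using bin wv by auto
    ultimately have vS: "v \<in> S n" by (simp add: S_good)
    have "w \<in> f v" using tB nA wv unfolding f_def by simp
    then show ?thesis using vS by blast
  next
    case 3
    then obtain k where k: "m = Suc (Suc k)" by (cases m; cases "m - 1") auto
    have k0: "k mod 3 = 0" using 3 k by arith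
    define v where "v = (u @ replicate k 0) @ [1]"
    have wv: "w = butlast v @ [0, 0]" using wu k v_def by (simp add: butlast_append replicate_append_same[symmetric])
    have ce: "typeC v \<or> typeE v"
    proof (cases "k = 0")
      case True
      show ?thesis
      proof (cases "u = []")
        case True then show ?thesis using TC[OF a, of k] \<open>k = 0\<close> v_def by auto
      next
        case False
        then have "last u = 1" using last01 a binu by blast
        then show ?thesis using TE[of u k] \<open>k = 0\<close> False v_def by auto
      qed
    next
      case False
      then show ?thesis using TC[OF a, of k] k0 v_def by auto
    qed
    have nA: "\<not> typeA v" and nB: "\<not> typeB v" unfolding v_def using notA1 notB1 by blast+
    have "good (u @ replicate k 0)" using gu good_rep[OF a, of k] k0 by auto
    then have "good v" using good_one v_def by metis
    moreover have "length v = n" using len wu k v_def by simp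
    moreover have "set v \<subseteq> {0,1}" using binu v_def by auto
    ultimately have vS: "v \<in> S n" by (simp add: S_good)
    have "w \<in> f v" using ce nA nB wv unfolding f_def by auto
    then show ?thesis using vS by blast
  qed
qed

lemma disj:
  assumes v: "v \<in> S n" and v': "v' \<in> S n" and x: "x \<in> f v" and x': "x \<in> f v'"
  shows "v = v'"
proof -
  have bin: "set v \<subseteq> {0,1}" and bin': "set v' \<subseteq> {0,1}" using v v' by (auto simp: S_good)
  have fv: "x = v @ [1] \<or> (typeB v \<and> x = v @ [0]) \<or> ((typeC v \<or> typeE v) \<and> x = butlast v @ [0,0])"
    using x unfolding f_def by (auto split: if_splits)
  have fv': "x = v' @ [1] \<or> (typeB v' \<and> x = v' @ [0]) \<or> ((typeC v' \<or> typeE v') \<and> x = butlast v' @ [0,0])"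
    using x' unfolding f_def by (auto split: if_splits)
  have BCE: False if B: "typeB a" and ce: "typeC b \<or> typeE b" and bc: "a @ [0] = butlast b @ [0,0]"
    and bb: "set b \<subseteq> {0,1}" for a b
  proof -
    obtain u' m' where b2: "b = (u' @ replicate m' 0) @ [1]" and a': "u' = [] \<or> last u' \<noteq> 0"
      and c: "(u' = [] \<and> m' = 0) \<or> (0 < m' \<and> m' mod 3 = 0) \<or> (m' = 0 \<and> u' \<noteq> [] \<and> last u' = 1)"
      using CE_decomp[OF ce bb] by blast
    have "butlast b = u' @ replicate m' 0" unfolding b2 butlast_snoc ..
    then have "a = u' @ replicate (Suc m') 0" using bc by (simp add: replicate_append_same[symmetric])
    then have "Suc m' mod 3 = 2" using B TB[OF a', of "Suc m'"] by simp
    moreover have "m' mod 3 = 0" using c by auto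
    ultimately show False by arith
  qed
  have ce_last: "typeC b \<or> typeE b \<Longrightarrow> b = butlast b @ [1]" for b
    using CE_shape[of b] snoc1 by blast
  have l1: "last (y @ [1]) = (1::nat)" for y :: "nat list" by simp
  have l0: "last (y @ [0]) = (0::nat)" for y :: "nat list" by simp
  have l00: "last (y @ [0, 0]) = (0::nat)" for y :: "nat list" by simp
  have b00: "y @ [0, 0] = z @ [0, 0] \<Longrightarrow> y = z" for y z :: "nat list" by simp
  from fv consider "x = v @ [1]" | "typeB v" "x = v @ [0]" | "typeC v \<or> typeE v" "x = butlast v @ [0, 0]"
    by blast
  then show ?thesis
  proof cases
    case 1
    note x1 = this
    from fv' consider "x = v' @ [1]" | "typeB v'" "x = v' @ [0]" | "typeC v' \<or> typeE v'" "x = butlast v' @ [0, 0]"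
      by blast
    then show ?thesis
    proof cases
      case 1 then show ?thesis using x1 by simp
    next
      case 2 then show ?thesis using x1 l1 l0 zero_neq_one by metis
    next
      case 3 then show ?thesis using x1 l1 l00 zero_neq_one by metis
    qed
  next
    case 2
    note B = this(1) and x0 = this(2)
    from fv' consider "x = v' @ [1]" | "typeB v'" "x = v' @ [0]" | "typeC v' \<or> typeE v'" "x = butlast v' @ [0, 0]"
      by blast
    then show ?thesis
    proof cases
      case 1 then show ?thesis using x0 l1 l0 zero_neq_one by metis
    next
      case 2 then show ?thesis using x0 by simp
    next
      case 3 then show ?thesis using x0 BCE[of v v'] B bin' by simp
    qed
  next
    case 3
    note ce = this(1) and x0 = this(2)
    from fv' consider "x = v' @ [1]" | "typeB v'" "x = v' @ [0]" | "typeC v' \<or> typeE v'" "x = butlast v' @ [0, 0]"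
      by blast
    then show ?thesis
    proof cases
      case 1 then show ?thesis using x0 l1 l00 zero_neq_one by metis
    next
      case 2 then show ?thesis using x0 BCE[of v' v] ce bin by simp
    next
      case 3 note ce' = this then have "butlast v = butlast v'" using x0 b00 by metis
      then show ?thesis using ce_last[OF ce] ce_last[OF ce'(1)] by metis
    qed
  qed
qed

theorem lemma1:
  fixes n :: nat
  assumes "n \<ge> 1"
  shows "(\<forall>v\<in>S n. \<forall>w\<in>S n. v \<noteq> w \<longrightarrow> f v \<inter> f w = {})
       \<and> S (Suc n) = (\<Union>v\<in>S n. f v)
       \<and> card (S (Suc n)) = (\<Sum>v\<in>S n. card (f v))"
proof (intro conjI)
  show D: "\<forall>v\<in>S n. \<forall>w\<in>S n. v \<noteq> w \<longrightarrow> f v \<inter> f w = {}"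
    using disj by blast
  show U: "S (Suc n) = (\<Union>v\<in>S n. f v)"
    using cover[OF _ assms] f_sub by blast
  have fin: "finite (S n)"
  proof (rule finite_subset)
    show "S n \<subseteq> {xs. set xs \<subseteq> {0,1} \<and> length xs = n}" by (auto simp: S_def)
    show "finite {xs. set xs \<subseteq> {0::nat,1} \<and> length xs = n}" by (rule finite_lists_length_eq) simp
  qed
  have ff: "\<forall>v\<in>S n. finite (f v)" unfolding f_def by auto
  show "card (S (Suc n)) = (\<Sum>v\<in>S n. card (f v))"
    unfolding U using card_UN_disjoint[OF fin ff] D by blast
qed

end
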